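(* Let $\mathcal O$ be an $N_\infty$ operad for the finite group $G$, and let $K\le H\le G$. If the $H$-set $H/K$ is admissible for $\mathcal O$ and the finite $K$-set $T$ is admissible for $\mathcal O$, then the induced $H$-set $H\times_K T$ is admissible for $\mathcal O$.
   Context: A $G$-operad $\mathcal O$ consists of $G\times\Sigma_n$-spaces $\mathcal O_n$ ($n\ge0$), a $G$-fixed identity $1\in\mathcal O_1$ and $G$-equivariant composition maps $\mathcal O_k\times\mathcal O_{n_1}\times\cdots\times\mathcal O_{n_k}\to\mathcal O_{n_1+\cdots+n_k}$ satisfying the usual operad axioms (associativity, unit, equivariance for symmetric groups). A family of subgroups is a set of subgroups closed under subgroups and conjugation; a universal space for a family $\mathcal F$ of subgroups of $\Pi$ is a $\Pi$-space whose $\Gamma$-fixed points are contractible for $\Gamma\in\mathcal F$ and empty otherwise. An $N_\infty$ operad is a $G$-operad with $\mathcal O_0$ $G$-contractible, $\Sigma_n$ acting freely on $\mathcal O_n$, and $\mathcal O_n$ a universal space for a family $\mathcal F_n(\mathcal O)$ of subgroups of $G\times\Sigma_n$ containing all $H\times\{1\}$. For $L\le G$ and a finite $L$-set $T$ with $|T|=n$, choosing $T\cong\{1,\dots,n\}$ gives a homomorphism $L\to\Sigma_n$ with graph $\Gamma_T\le G\times\Sigma_n$ (well defined up to $\Sigma_n$-conjugacy); $T$ is admissible for $\mathcal O$ if $\mathcal O_n^{\Gamma_T}\neq\emptyset$. *)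

theory Defs
  imports "HOL-Analysis.Analysis" "HOL-Algebra.Group" "HOL-Algebra.Coset"
begin

definition Sym :: "nat \<Rightarrow> (nat \<Rightarrow> nat) monoid" where
  "Sym n = \<lparr>carrier = {p. p permutes {..<n}}, mult = (\<circ>), one = id\<rparr>"

definition top_action :: "('p, 'm) monoid_scheme \<Rightarrow> 'a topology \<Rightarrow> ('p \<Rightarrow> 'a \<Rightarrow> 'a) \<Rightarrow> bool" where
  "top_action PP X act \<longleftrightarrow>
     (\<forall>g\<in>carrier PP. continuous_map X X (act g)) \<and>
     (\<forall>x\<in>topspace X. act \<one>\<^bsub>PP\<^esub> x = x) \<and>
     (\<forall>g\<in>carrier PP. \<forall>h\<in>carrier PP. \<forall>x\<in>topspace X. act (g \<otimes>\<^bsub>PP\<^esub> h) x = act g (act h x))"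

definition fixset :: "'p set \<Rightarrow> ('p \<Rightarrow> 'a \<Rightarrow> 'a) \<Rightarrow> 'a topology \<Rightarrow> 'a set" where
  "fixset Gam act X = {x \<in> topspace X. \<forall>g\<in>Gam. act g x = x}"

definition family_of_subgroups :: "('p, 'm) monoid_scheme \<Rightarrow> 'p set set \<Rightarrow> bool" where
  "family_of_subgroups PP F \<longleftrightarrow>
     (\<forall>Gam\<in>F. subgroup Gam PP) \<and>
     (\<forall>Gam\<in>F. \<forall>Gam'. subgroup Gam' PP \<and> Gam' \<subseteq> Gam \<longrightarrow> Gam' \<in> F) \<and>
     (\<forall>Gam\<in>F. \<forall>p\<in>carrier PP. (\<lambda>g. p \<otimes>\<^bsub>PP\<^esub> g \<otimes>\<^bsub>PP\<^esub> inv\<^bsub>PP\<^esub> p) ` Gam \<in> F)"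

definition universal_space :: "('p, 'm) monoid_scheme \<Rightarrow> 'p set set \<Rightarrow> 'a topology \<Rightarrow> ('p \<Rightarrow> 'a \<Rightarrow> 'a) \<Rightarrow> bool" where
  "universal_space PP F X act \<longleftrightarrow>
     (\<forall>Gam. subgroup Gam PP \<longrightarrow>
        (Gam \<in> F \<longrightarrow> fixset Gam act X \<noteq> {} \<and> contractible_space (subtopology X (fixset Gam act X))) \<and>
        (Gam \<notin> F \<longrightarrow> fixset Gam act X = {}))"

text \<open>G-contractible: equivariantly homotopy equivalent to a point, i.e. there is a G-fixed point
  and an equivariant homotopy from the identity to the constant map at it.\<close>
definition G_contractible :: "('g, 'm) monoid_scheme \<Rightarrow> 'a topology \<Rightarrow> ('g \<Rightarrow> 'a \<Rightarrow> 'a) \<Rightarrow> bool" where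
  "G_contractible G X act \<longleftrightarrow>
     (\<exists>a\<in>topspace X. (\<forall>g\<in>carrier G. act g a = a) \<and>
        homotopic_with (\<lambda>f. \<forall>g\<in>carrier G. \<forall>x\<in>topspace X. f (act g x) = act g (f x))
           X X id (\<lambda>x. a))"

definition off :: "nat list \<Rightarrow> nat \<Rightarrow> nat" where
  "off ns i = sum_list (take i ns)"

definition blk :: "nat list \<Rightarrow> nat \<Rightarrow> nat" where
  "blk ns p = (LEAST i. p < off ns (Suc i))"

definition block_sum :: "nat list \<Rightarrow> (nat \<Rightarrow> nat \<Rightarrow> nat) \<Rightarrow> nat \<Rightarrow> nat" where
  "block_sum ns taus p =
     (if p < sum_list ns then off ns (blk ns p) + taus (blk ns p) (p - off ns (blk ns p)) else p)"

definition permute_list :: "nat list \<Rightarrow> (nat \<Rightarrow> nat) \<Rightarrow> nat list" where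
  "permute_list ns s = map (\<lambda>j. ns ! s j) [0..<length ns]"

text \<open>Block permutation: position p in the layout of (permute_list ns s), lying in block j at
  offset r, goes to position off ns (s j) + r in the layout of ns.\<close>
definition block_perm :: "nat list \<Rightarrow> (nat \<Rightarrow> nat) \<Rightarrow> nat \<Rightarrow> nat" where
  "block_perm ns s p =
     (let ns' = permute_list ns s in
      if p < sum_list ns' then off ns (s (blk ns' p)) + (p - off ns' (blk ns' p)) else p)"

text \<open>A G-operad: spaces Op n (all carried by one type 'a), continuous actions act n of G x Sym n,
  identity e, composition maps gamma ns : Op k x Op (ns!0) x ... x Op (ns!(k-1)) \<rightarrow> Op (sum ns),
  where k = length ns and the tuple of inputs is an extensional function on {..<k}.
  Convention for Sym-actions: an operation with k inputs behaves like a function f(a_0..a_{k-1}),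
  and (s.f)(a_0,..,a_{k-1}) = f(a_{s 0},..,a_{s (k-1)}).\<close>
definition G_operad ::
  "('g, 'm) monoid_scheme \<Rightarrow> (nat \<Rightarrow> 'a topology) \<Rightarrow> (nat \<Rightarrow> 'g \<times> (nat \<Rightarrow> nat) \<Rightarrow> 'a \<Rightarrow> 'a)
     \<Rightarrow> 'a \<Rightarrow> (nat list \<Rightarrow> 'a \<Rightarrow> (nat \<Rightarrow> 'a) \<Rightarrow> 'a) \<Rightarrow> bool" where
  "G_operad G Op act e gamma \<longleftrightarrow>
     group G \<and>
     (\<forall>n. top_action (G \<times>\<times> Sym n) (Op n) (act n)) \<and>
     \<comment> \<open>identity\<close>
     e \<in> topspace (Op 1) \<and> (\<forall>g\<in>carrier G. act 1 (g, id) e = e) \<and>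
     \<comment> \<open>composition maps are continuous maps into the right space\<close>
     (\<forall>ns. continuous_map
              (prod_topology (Op (length ns)) (product_topology (\<lambda>i. Op (ns ! i)) {..<length ns}))
              (Op (sum_list ns)) (\<lambda>(x, ys). gamma ns x ys)) \<and>
     \<comment> \<open>G-equivariance\<close>
     (\<forall>ns x ys g. x \<in> topspace (Op (length ns)) \<and> ys \<in> (PiE {..<length ns} (\<lambda>i. topspace (Op (ns ! i))))
        \<and> g \<in> carrier G \<longrightarrow>
        gamma ns (act (length ns) (g, id) x) (\<lambda>i\<in>{..<length ns}. act (ns ! i) (g, id) (ys i))
          = act (sum_list ns) (g, id) (gamma ns x ys)) \<and>
     \<comment> \<open>associativity\<close>
     (\<forall>ns ms x ys zs. length ms = sum_list ns \<and> x \<in> topspace (Op (length ns)) \<and>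
        ys \<in> (PiE {..<length ns} (\<lambda>i. topspace (Op (ns ! i)))) \<and>
        zs \<in> (PiE {..<length ms} (\<lambda>j. topspace (Op (ms ! j)))) \<longrightarrow>
        gamma ms (gamma ns x ys) zs =
        gamma (map (\<lambda>i. sum_list (take (ns ! i) (drop (off ns i) ms))) [0..<length ns]) x
          (\<lambda>i\<in>{..<length ns}. gamma (take (ns ! i) (drop (off ns i) ms)) (ys i)
                                 (\<lambda>j\<in>{..<ns ! i}. zs (off ns i + j)))) \<and>
     \<comment> \<open>unit laws\<close>
     (\<forall>n y. y \<in> topspace (Op n) \<longrightarrow> gamma [n] e (\<lambda>i\<in>{..<1}. y) = y) \<and>
     (\<forall>k x. x \<in> topspace (Op k) \<longrightarrow> gamma (replicate k 1) x (\<lambda>i\<in>{..<k}. e) = x) \<and>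
     \<comment> \<open>equivariance for the symmetric groups: permuting the inputs\<close>
     (\<forall>ns x ys s. x \<in> topspace (Op (length ns)) \<and> ys \<in> (PiE {..<length ns} (\<lambda>i. topspace (Op (ns ! i))))
        \<and> s permutes {..<length ns} \<longrightarrow>
        gamma ns (act (length ns) (\<one>\<^bsub>G\<^esub>, s) x) ys
          = act (sum_list ns) (\<one>\<^bsub>G\<^esub>, block_perm ns s) (gamma (permute_list ns s) x (\<lambda>j. ys (s j)))) \<and>
     \<comment> \<open>equivariance for the symmetric groups: block sums\<close>
     (\<forall>ns x ys taus. x \<in> topspace (Op (length ns)) \<and> ys \<in> (PiE {..<length ns} (\<lambda>i. topspace (Op (ns ! i))))
        \<and> (\<forall>i<length ns. taus i permutes {..<ns ! i}) \<longrightarrow>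
        gamma ns x (\<lambda>i\<in>{..<length ns}. act (ns ! i) (\<one>\<^bsub>G\<^esub>, taus i) (ys i))
          = act (sum_list ns) (\<one>\<^bsub>G\<^esub>, block_sum ns taus) (gamma ns x ys))"

definition N_infty_operad ::
  "('g, 'm) monoid_scheme \<Rightarrow> (nat \<Rightarrow> 'a topology) \<Rightarrow> (nat \<Rightarrow> 'g \<times> (nat \<Rightarrow> nat) \<Rightarrow> 'a \<Rightarrow> 'a)
     \<Rightarrow> 'a \<Rightarrow> (nat list \<Rightarrow> 'a \<Rightarrow> (nat \<Rightarrow> 'a) \<Rightarrow> 'a) \<Rightarrow> bool" where
  "N_infty_operad G Op act e gamma \<longleftrightarrow>
     G_operad G Op act e gamma \<and>
     G_contractible G (Op 0) (\<lambda>g. act 0 (g, id)) \<and>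
     (\<forall>n. \<forall>s\<in>carrier (Sym n). \<forall>x\<in>topspace (Op n). act n (\<one>\<^bsub>G\<^esub>, s) x = x \<longrightarrow> s = id) \<and>
     (\<forall>n. \<exists>F. family_of_subgroups (G \<times>\<times> Sym n) F \<and>
            (\<forall>H. subgroup H G \<longrightarrow> H \<times> {id} \<in> F) \<and>
            universal_space (G \<times>\<times> Sym n) F (Op n) (act n))"

definition set_action :: "('g, 'm) monoid_scheme \<Rightarrow> 'g set \<Rightarrow> 'b set \<Rightarrow> ('g \<Rightarrow> 'b \<Rightarrow> 'b) \<Rightarrow> bool" where
  "set_action G L T tact \<longleftrightarrow>
     (\<forall>l\<in>L. \<forall>t\<in>T. tact l t \<in> T) \<and>
     (\<forall>t\<in>T. tact \<one>\<^bsub>G\<^esub> t = t) \<and>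
     (\<forall>l\<in>L. \<forall>l'\<in>L. \<forall>t\<in>T. tact (l \<otimes>\<^bsub>G\<^esub> l') t = tact l (tact l' t))"

text \<open>Given a bijection f : T \<rightarrow> {..<n}, the homomorphism L \<rightarrow> Sym n and its graph.\<close>
definition perm_via :: "'b set \<Rightarrow> ('b \<Rightarrow> nat) \<Rightarrow> ('g \<Rightarrow> 'b \<Rightarrow> 'b) \<Rightarrow> 'g \<Rightarrow> nat \<Rightarrow> nat" where
  "perm_via T f tact l = (\<lambda>p. if p < card T then f (tact l (inv_into T f p)) else p)"

definition graph_of :: "'g set \<Rightarrow> 'b set \<Rightarrow> ('b \<Rightarrow> nat) \<Rightarrow> ('g \<Rightarrow> 'b \<Rightarrow> 'b) \<Rightarrow> ('g \<times> (nat \<Rightarrow> nat)) set" where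
  "graph_of L T f tact = {(l, perm_via T f tact l) | l. l \<in> L}"

definition admissible ::
  "(nat \<Rightarrow> 'a topology) \<Rightarrow> (nat \<Rightarrow> 'g \<times> (nat \<Rightarrow> nat) \<Rightarrow> 'a \<Rightarrow> 'a)
     \<Rightarrow> 'g set \<Rightarrow> 'b set \<Rightarrow> ('g \<Rightarrow> 'b \<Rightarrow> 'b) \<Rightarrow> bool" where
  "admissible Op act L T tact \<longleftrightarrow>
     (\<exists>f. bij_betw f T {..<card T} \<and>
          fixset (graph_of L T f tact) (act (card T)) (Op (card T)) \<noteq> {})"

definition coset_set :: "('g, 'm) monoid_scheme \<Rightarrow> 'g set \<Rightarrow> 'g set \<Rightarrow> 'g set set" where
  "coset_set G H K = {a <#\<^bsub>G\<^esub> K | a. a \<in> H}"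

definition coset_act :: "('g, 'm) monoid_scheme \<Rightarrow> 'g \<Rightarrow> 'g set \<Rightarrow> 'g set" where
  "coset_act G h C = h <#\<^bsub>G\<^esub> C"

text \<open>H \<times>_K T = (H \<times> T)/K, where k.(h,t) = (h k^-1, k t); elements are the K-orbits.\<close>
definition ind_class :: "('g, 'm) monoid_scheme \<Rightarrow> 'g set \<Rightarrow> ('g \<Rightarrow> 'b \<Rightarrow> 'b) \<Rightarrow> 'g \<Rightarrow> 'b \<Rightarrow> ('g \<times> 'b) set" where
  "ind_class G K tact h t = {(h \<otimes>\<^bsub>G\<^esub> inv\<^bsub>G\<^esub> k, tact k t) | k. k \<in> K}"

definition ind_set :: "('g, 'm) monoid_scheme \<Rightarrow> 'g set \<Rightarrow> 'g set \<Rightarrow> 'b set \<Rightarrow> ('g \<Rightarrow> 'b \<Rightarrow> 'b) \<Rightarrow> ('g \<times> 'b) set set" where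
  "ind_set G H K T tact = {ind_class G K tact h t | h t. h \<in> H \<and> t \<in> T}"

definition ind_act :: "('g, 'm) monoid_scheme \<Rightarrow> 'g \<Rightarrow> ('g \<times> 'b) set \<Rightarrow> ('g \<times> 'b) set" where
  "ind_act G h' C = (\<lambda>(h, t). (h' \<otimes>\<^bsub>G\<^esub> h, t)) ` C"

end

theory Submission imports Defs begin

lemma pv_less:
  assumes "set_action G L T tact" "bij_betw f T {..<card T}" "l \<in> L" "p < card T"
  shows "perm_via T f tact l p < card T"
proof -
  have "inv_into T f p \<in> T" using assms by (metis bij_betw_def inv_into_into lessThan_iff)
  hence "tact l (inv_into T f p) \<in> T" using assms(1,3) unfolding set_action_def by blast
  thus ?thesis using assms unfolding perm_via_def bij_betw_def by auto
qed

lemma pv_comp: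
  assumes "set_action G L T tact" "bij_betw f T {..<card T}" "l \<in> L" "l' \<in> L"
  shows "perm_via T f tact (l \<otimes>\<^bsub>G\<^esub> l') = perm_via T f tact l \<circ> perm_via T f tact l'"
proof
  fix p
  show "perm_via T f tact (l \<otimes>\<^bsub>G\<^esub> l') p = (perm_via T f tact l \<circ> perm_via T f tact l') p"
  proof (cases "p < card T")
    case True
    have t: "inv_into T f p \<in> T" using assms True by (metis bij_betw_def inv_into_into lessThan_iff)
    hence t2: "tact l' (inv_into T f p) \<in> T" using assms(1,4) unfolding set_action_def by blast
    have lt: "perm_via T f tact l' p < card T" using pv_less assms True by metis
    have ii: "inv_into T f (f (tact l' (inv_into T f p))) = tact l' (inv_into T f p)"
      using t2 assms(2) by (simp add: bij_betw_def)
    have act: "tact (l \<otimes>\<^bsub>G\<^esub> l') (inv_into T f p) = tact l (tact l' (inv_into T f p))"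
      using t assms(1,3,4) unfolding set_action_def by blast
    have "(perm_via T f tact l \<circ> perm_via T f tact l') p = f (tact l (tact l' (inv_into T f p)))"
      using lt True ii unfolding perm_via_def by simp
    thus ?thesis using True act unfolding perm_via_def by simp
  next
    case False
    then show ?thesis unfolding perm_via_def by simp
  qed
qed

lemma pv_one:
  assumes "set_action G L T tact" "bij_betw f T {..<card T}"
  shows "perm_via T f tact \<one>\<^bsub>G\<^esub> = id"
proof
  fix p show "perm_via T f tact \<one>\<^bsub>G\<^esub> p = id p"
  proof (cases "p < card T")
    case True
    have t: "inv_into T f p \<in> T" using assms True by (metis bij_betw_def inv_into_into lessThan_iff)
    thus ?thesis using assms True unfolding perm_via_def set_action_def
      by (simp add: bij_betw_inv_into_right)
  qed (simp add: perm_via_def)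
qed

lemma pv_permutes:
  assumes "group G" "subgroup L G" "set_action G L T tact" "bij_betw f T {..<card T}" "l \<in> L"
  shows "perm_via T f tact l permutes {..<card T}"
proof -
  interpret group G by fact
  have il: "inv\<^bsub>G\<^esub> l \<in> L" by (rule subgroup.m_inv_closed[OF assms(2,5)])
  have lc: "l \<in> carrier G" by (rule subgroup.mem_carrier[OF assms(2,5)])
  have c1: "perm_via T f tact l \<circ> perm_via T f tact (inv\<^bsub>G\<^esub> l) = id"
    using pv_comp[OF assms(3,4,5) il, symmetric] pv_one[OF assms(3,4)] r_inv[OF lc] by simp
  have c2: "perm_via T f tact (inv\<^bsub>G\<^esub> l) \<circ> perm_via T f tact l = id"
    using pv_comp[OF assms(3,4) il assms(5), symmetric] pv_one[OF assms(3,4)] l_inv[OF lc] by simp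
  show ?thesis unfolding permutes_def
  proof (intro conjI allI impI)
    fix x assume "x \<notin> {..<card T}" thus "perm_via T f tact l x = x" by (simp add: perm_via_def)
  next
    fix y
    have a: "perm_via T f tact l (perm_via T f tact (inv\<^bsub>G\<^esub> l) y) = y"
      using fun_cong[OF c1, of y] by simp
    have b: "\<And>x. perm_via T f tact (inv\<^bsub>G\<^esub> l) (perm_via T f tact l x) = x"
      using fun_cong[OF c2] by simp
    show "\<exists>!x. perm_via T f tact l x = y"
    proof (rule ex1I[where P="\<lambda>x. perm_via T f tact l x = y", OF a])
      fix x assume "perm_via T f tact l x = y"
      thus "x = perm_via T f tact (inv\<^bsub>G\<^esub> l) y" using b[of x] by simp
    qed
  qed
qed

lemma off_rep: "i \<le> m \<Longrightarrow> off (replicate m n) i = i * n"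
  unfolding off_def by (simp add: min_def sum_list_replicate)

lemma perm_lt: "s permutes {..<m} \<Longrightarrow> i < m \<Longrightarrow> s i < (m::nat)"
  using permutes_in_image[of s "{..<m}" i] by simp

lemma blk_rep: assumes "p < m * n" shows "blk (replicate m n) p = p div n"
proof -
  have n: "n > 0" using assms by (cases n) auto
  have pm: "p div n < m" using assms n by (simp add: div_less_iff_less_mult mult.commute)
  show ?thesis unfolding blk_def
  proof (rule Least_equality)
    show "p < off (replicate m n) (Suc (p div n))"
      using pm n off_rep[of "Suc (p div n)" m n] by (simp add: dividend_less_div_times)
  next
    fix y assume y: "p < off (replicate m n) (Suc y)"
    have "off (replicate m n) (Suc y) \<le> Suc y * n"
    proof (cases "Suc y \<le> m")
      case False
      hence "m * n \<le> Suc y * n" by (intro mult_le_mono1) simp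
      thus ?thesis using False by (simp add: off_def min_def sum_list_replicate)
    qed (simp add: off_def min_def sum_list_replicate)
    hence "p < Suc y * n" using y by linarith
    hence "p div n < Suc y" by (rule less_mult_imp_div_less)
    thus "p div n \<le> y" by simp
  qed
qed

lemma plist_rep: "s permutes {..<m} \<Longrightarrow> permute_list (replicate m n) s = replicate m n"
  unfolding permute_list_def
  by (simp add: list_eq_iff_nth_eq perm_lt)

lemma bp_rep: assumes "s permutes {..<m}"
  shows "block_perm (replicate m n) s p = (if p < m * n then s (p div n) * n + p mod n else p)"
proof (cases "p < m * n")
  case True
  have "p div n < m" using True by (cases n) (auto simp: div_less_iff_less_mult mult.commute)
  hence "s (p div n) < m" "p div n \<le> m" using assms by (simp_all add: perm_lt)
  thus ?thesis using True assms unfolding block_perm_def Let_def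
    by (simp add: plist_rep blk_rep off_rep minus_div_mult_eq_mod sum_list_replicate)
qed (simp add: block_perm_def Let_def plist_rep[OF assms] sum_list_replicate)

lemma bs_rep:
  shows "block_sum (replicate m n) taus p = (if p < m * n then (p div n) * n + taus (p div n) (p mod n) else p)"
proof (cases "p < m * n")
  case True
  have "p div n < m" using True by (cases n) (auto simp: div_less_iff_less_mult mult.commute)
  thus ?thesis using True unfolding block_sum_def
    by (simp add: blk_rep off_rep minus_div_mult_eq_mod sum_list_replicate)
qed (simp add: block_sum_def sum_list_replicate)

lemma dm_unique: assumes "a * n + b = c * n + (d::nat)" "b < n" "d < n" shows "a = c \<and> b = d"
proof -
  have n: "n > 0" using assms by simp
  have 1: "(a * n + b) div n = a" using assms(2) n by simp
  have 2: "(c * n + d) div n = c" using assms(3) n by simp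
  have 3: "(a * n + b) mod n = b" using assms(2) n by simp
  have 4: "(c * n + d) mod n = d" using assms(3) n by simp
  show ?thesis using 1 2 3 4 assms(1) by metis
qed

lemma perm_from_inj:
  fixes N :: nat
  assumes "\<And>p. p < N \<Longrightarrow> f p < N" "inj_on f {..<N}" "\<And>p. p \<ge> N \<Longrightarrow> f p = p"
  shows "f permutes {..<N}"
proof (rule bij_imp_permutes)
  have "f ` {..<N} \<subseteq> {..<N}" using assms(1) by auto
  hence "f ` {..<N} = {..<N}" using endo_inj_surj[OF finite_lessThan _ assms(2)] by blast
  thus "bij_betw f {..<N} {..<N}" using assms(2) by (simp add: bij_betw_def)
qed (use assms in auto)

lemma bp_permutes: assumes "s permutes {..<m}"
  shows "block_perm (replicate m n) s permutes {..<m * n}"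
proof (rule perm_from_inj)
  fix p assume p: "p < m * n"
  have "p div n < m" using p by (cases n) (auto simp: div_less_iff_less_mult mult.commute)
  hence "Suc (s (p div n)) \<le> m" using assms by (simp add: perm_lt Suc_le_eq)
  hence "Suc (s (p div n)) * n \<le> m * n" by (rule mult_le_mono1)
  moreover have "p mod n < n" using p by (cases n) auto
  ultimately show "block_perm (replicate m n) s p < m * n" using bp_rep[OF assms] p by simp
next
  show "inj_on (block_perm (replicate m n) s) {..<m * n}"
  proof (rule inj_onI)
    fix p q assume p: "p \<in> {..<m * n}" and q: "q \<in> {..<m * n}"
      and e: "block_perm (replicate m n) s p = block_perm (replicate m n) s q"
    have n: "n > 0" using p by (cases n) auto
    have "s (p div n) * n + p mod n = s (q div n) * n + q mod n"
      using e p q unfolding bp_rep[OF assms] by simp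
    hence "s (p div n) = s (q div n) \<and> p mod n = q mod n"
      using dm_unique mod_less_divisor[OF n] by blast
    hence "p div n = q div n" "p mod n = q mod n" using assms by (auto simp: permutes_def)
    thus "p = q" by (metis div_mult_mod_eq)
  qed
qed (simp add: bp_rep[OF assms])

lemma bs_permutes: assumes "\<And>i. i < m \<Longrightarrow> taus i permutes {..<n}"
  shows "block_sum (replicate m n) taus permutes {..<m * n}"
proof (rule perm_from_inj)
  fix p assume p: "p < m * n"
  have i: "p div n < m" using p by (cases n) (auto simp: div_less_iff_less_mult mult.commute)
  hence "Suc (p div n) * n \<le> m * n" using mult_le_mono1 Suc_le_eq by blast
  moreover have "p mod n < n" using p by (cases n) auto
  hence "taus (p div n) (p mod n) < n" using assms[OF i] by (simp add: perm_lt)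
  ultimately show "block_sum (replicate m n) taus p < m * n" using bs_rep p by simp
next
  show "inj_on (block_sum (replicate m n) taus) {..<m * n}"
  proof (rule inj_onI)
    fix p q assume p: "p \<in> {..<m * n}" and q: "q \<in> {..<m * n}"
      and e: "block_sum (replicate m n) taus p = block_sum (replicate m n) taus q"
    have n: "n > 0" using p by (cases n) auto
    have ip: "p div n < m" using p n by (auto simp: div_less_iff_less_mult mult.commute)
    have iq: "q div n < m" using q n by (auto simp: div_less_iff_less_mult mult.commute)
    have l1: "taus (p div n) (p mod n) < n" using assms[OF ip] n by (simp add: perm_lt)
    have l2: "taus (q div n) (q mod n) < n" using assms[OF iq] n by (simp add: perm_lt)
    have "p div n * n + taus (p div n) (p mod n) = q div n * n + taus (q div n) (q mod n)"
      using e p q unfolding bs_rep by simp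
    hence d: "p div n = q div n \<and> taus (p div n) (p mod n) = taus (q div n) (q mod n)"
      using l1 l2 by (rule dm_unique)
    hence "p mod n = q mod n" using permutes_inj[OF assms[OF iq]] by (auto dest: injD)
    thus "p = q" using d by (metis div_mult_mod_eq)
  qed
qed (simp add: bs_rep)


lemma Sym_simps[simp]: "carrier (Sym n) = {p. p permutes {..<n}}" "mult (Sym n) = (\<circ>)" "one (Sym n) = id"
  by (simp_all add: Sym_def)

lemma act_comp: "top_action P X a \<Longrightarrow> g \<in> carrier P \<Longrightarrow> h \<in> carrier P \<Longrightarrow> x \<in> topspace X
   \<Longrightarrow> a (g \<otimes>\<^bsub>P\<^esub> h) x = a g (a h x)"
  unfolding top_action_def by blast

lemma act_top: "top_action P X a \<Longrightarrow> g \<in> carrier P \<Longrightarrow> x \<in> topspace X \<Longrightarrow> a g x \<in> topspace X"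
  unfolding top_action_def using continuous_map_image_subset_topspace by blast

lemma act_one: "top_action P X a \<Longrightarrow> x \<in> topspace X \<Longrightarrow> a \<one>\<^bsub>P\<^esub> x = x"
  unfolding top_action_def by blast

context
  fixes G :: "('g, 'm) monoid_scheme" (structure) and K :: "'g set" and T :: "'b set" and tact
  assumes grp: "group G" and sK: "subgroup K G" and sa: "set_action G K T tact"
begin

interpretation group G by (rule grp)

lemma cancel1: "x \<in> carrier G \<Longrightarrow> y \<in> carrier G \<Longrightarrow> x \<otimes> (inv x \<otimes> y) = y"
  by (simp add: m_assoc[symmetric])

lemma cancel2: "x \<in> carrier G \<Longrightarrow> y \<in> carrier G \<Longrightarrow> inv x \<otimes> (x \<otimes> y) = y"
  by (simp add: m_assoc[symmetric])

lemma ic_shift: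
  assumes a: "a \<in> carrier G" and k: "k \<in> K" and t: "t \<in> T"
  shows "ind_class G K tact (a \<otimes> k) t = ind_class G K tact a (tact k t)"
proof -
  have kc: "k \<in> carrier G" by (rule subgroup.mem_carrier[OF sK k])
  have KC: "\<And>k. k \<in> K \<Longrightarrow> k \<in> carrier G" by (rule subgroup.mem_carrier[OF sK])
  show ?thesis unfolding ind_class_def
  proof (intro equalityI subsetI)
    fix z assume "z \<in> {(a \<otimes> k \<otimes> inv k', tact k' t) |k'. k' \<in> K}"
    then obtain k' where k': "k' \<in> K" "z = (a \<otimes> k \<otimes> inv k', tact k' t)" by blast
    have k'c: "k' \<in> carrier G" using KC k'(1) .
    have m: "k' \<otimes> inv k \<in> K" by (rule subgroup.m_closed[OF sK k'(1) subgroup.m_inv_closed[OF sK k]])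
    have e1: "a \<otimes> inv (k' \<otimes> inv k) = a \<otimes> k \<otimes> inv k'"
      using a kc k'c by (simp add: inv_mult_group m_assoc)
    have e2: "tact (k' \<otimes> inv k) (tact k t) = tact k' t"
    proof -
      have "tact ((k' \<otimes> inv k) \<otimes> k) t = tact (k' \<otimes> inv k) (tact k t)"
        using sa m k t unfolding set_action_def by simp
      hence "tact (k' \<otimes> inv k) (tact k t) = tact ((k' \<otimes> inv k) \<otimes> k) t" by simp
      also have "(k' \<otimes> inv k) \<otimes> k = k'" using kc k'c by (simp add: m_assoc)
      finally show ?thesis .
    qed
    show "z \<in> {(a \<otimes> inv k'', tact k'' (tact k t)) |k''. k'' \<in> K}"
      unfolding mem_Collect_eq k'(2) by (rule exI[of _ "k' \<otimes> inv k"]) (simp add: m e1 e2)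
  next
    fix z assume "z \<in> {(a \<otimes> inv k'', tact k'' (tact k t)) |k''. k'' \<in> K}"
    then obtain k' where k': "k' \<in> K" "z = (a \<otimes> inv k', tact k' (tact k t))" by blast
    have k'c: "k' \<in> carrier G" using KC k'(1) .
    have m: "k' \<otimes> k \<in> K" by (rule subgroup.m_closed[OF sK k'(1) k])
    have e1: "a \<otimes> k \<otimes> inv (k' \<otimes> k) = a \<otimes> inv k'"
      using a kc k'c by (simp add: inv_mult_group m_assoc cancel1)
    have e2: "tact (k' \<otimes> k) t = tact k' (tact k t)"
      using sa k k'(1) t unfolding set_action_def by simp
    show "z \<in> {(a \<otimes> k \<otimes> inv k', tact k' t) |k'. k' \<in> K}"
      unfolding mem_Collect_eq k'(2) by (rule exI[of _ "k' \<otimes> k"]) (simp add: m e1 e2)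
  qed
qed



lemma ic_self: assumes a: "a \<in> carrier G" and t: "t \<in> T" shows "(a, t) \<in> ind_class G K tact a t"
proof -
  have "tact \<one> t = t" using sa t unfolding set_action_def by simp
  hence "(a, t) = (a \<otimes> inv \<one>, tact \<one> t)" using a by simp
  thus ?thesis unfolding ind_class_def using subgroup.one_closed[OF sK] by blast
qed

lemma ic_act: assumes h: "h \<in> carrier G" and a: "a \<in> carrier G"
  shows "ind_act G h (ind_class G K tact a t) = ind_class G K tact (h \<otimes> a) t"
proof -
  have KC: "\<And>k. k \<in> K \<Longrightarrow> k \<in> carrier G" by (rule subgroup.mem_carrier[OF sK])
  have "(\<lambda>(h', t). (h \<otimes> h', t)) ` {(a \<otimes> inv k, tact k t) |k. k \<in> K}
      = (\<lambda>k. (h \<otimes> (a \<otimes> inv k), tact k t)) ` K" by auto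
  also have "\<dots> = (\<lambda>k. (h \<otimes> a \<otimes> inv k, tact k t)) ` K"
    using h a KC by (intro image_cong refl) (simp add: m_assoc)
  also have "\<dots> = {(h \<otimes> a \<otimes> inv k, tact k t) |k. k \<in> K}" by auto
  finally show ?thesis unfolding ind_act_def ind_class_def .
qed

lemma ic_mem: "(b, u) \<in> ind_class G K tact a t \<Longrightarrow> \<exists>k\<in>K. b = a \<otimes> inv k \<and> u = tact k t"
  unfolding ind_class_def by auto

lemma lc_self: "a \<in> carrier G \<Longrightarrow> a \<in> a <# K"
  unfolding l_coset_def using subgroup.one_closed[OF sK] r_one by force

lemma lc_eq: assumes a: "a \<in> carrier G" and b: "b \<in> carrier G" and e: "a <# K = b <# K"
  shows "inv b \<otimes> a \<in> K"
proof -
  have "a \<in> b <# K" using lc_self[OF a] e by simp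
  then obtain k where k: "k \<in> K" "a = b \<otimes> k" unfolding l_coset_def by blast
  have "inv b \<otimes> a = k" using k b subgroup.mem_carrier[OF sK k(1)] by (simp add: cancel2)
  thus ?thesis using k by simp
qed

lemma lc_eqI: assumes a: "a \<in> carrier G" and k: "k \<in> K" shows "(a \<otimes> k) <# K = a <# K"
proof -
  have "a \<otimes> k \<in> a <# K" unfolding l_coset_def using k by blast
  thus ?thesis using l_repr_independence[OF _ a sK] by simp
qed

lemma coset_action:
  assumes sH: "subgroup H G" and KH: "K \<subseteq> H"
  shows "set_action G H (coset_set G H K) (coset_act G)"
  unfolding set_action_def
proof (intro conjI ballI)
  have KC: "K \<subseteq> carrier G" by (rule subgroup.subset[OF sK])
  have HC: "\<And>h. h \<in> H \<Longrightarrow> h \<in> carrier G" by (rule subgroup.mem_carrier[OF sH])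
  fix l C assume l: "l \<in> H" and C: "C \<in> coset_set G H K"
  then obtain a where a: "a \<in> H" "C = a <# K" unfolding coset_set_def by blast
  have "coset_act G l C = (l \<otimes> a) <# K" unfolding coset_act_def a(2)
    using lcos_m_assoc[OF KC HC[OF l] HC[OF a(1)]] .
  moreover have "l \<otimes> a \<in> H" using subgroup.m_closed[OF sH l a(1)] .
  ultimately show "coset_act G l C \<in> coset_set G H K" unfolding coset_set_def by blast
next
  have KC: "K \<subseteq> carrier G" by (rule subgroup.subset[OF sK])
  fix C assume C: "C \<in> coset_set G H K"
  then obtain a where a: "a \<in> H" "C = a <# K" unfolding coset_set_def by blast
  have "C \<subseteq> carrier G" unfolding a(2) using l_coset_subset_G[OF KC] subgroup.mem_carrier[OF sH a(1)] .
  thus "coset_act G \<one> C = C" unfolding coset_act_def by (rule lcos_mult_one)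
next
  have KC: "K \<subseteq> carrier G" by (rule subgroup.subset[OF sK])
  fix l l' C assume l: "l \<in> H" and l': "l' \<in> H" and C: "C \<in> coset_set G H K"
  then obtain a where a: "a \<in> H" "C = a <# K" unfolding coset_set_def by blast
  have "C \<subseteq> carrier G" unfolding a(2) using l_coset_subset_G[OF KC] subgroup.mem_carrier[OF sH a(1)] .
  thus "coset_act G (l \<otimes> l') C = coset_act G l (coset_act G l' C)" unfolding coset_act_def
    using lcos_m_assoc subgroup.mem_carrier[OF sH l] subgroup.mem_carrier[OF sH l'] by simp
qed



lemma ind_action:
  assumes sH: "subgroup H G"
  shows "set_action G H (ind_set G H K T tact) (ind_act G)"
  unfolding set_action_def
proof (intro conjI ballI)
  have HC: "\<And>h. h \<in> H \<Longrightarrow> h \<in> carrier G" by (rule subgroup.mem_carrier[OF sH])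
  fix l C assume l: "l \<in> H" and C: "C \<in> ind_set G H K T tact"
  then obtain a t where a: "a \<in> H" "t \<in> T" "C = ind_class G K tact a t" unfolding ind_set_def by blast
  have "ind_act G l C = ind_class G K tact (l \<otimes> a) t" unfolding a(3) by (rule ic_act[OF HC[OF l] HC[OF a(1)]])
  moreover have "l \<otimes> a \<in> H" using subgroup.m_closed[OF sH l a(1)] .
  ultimately show "ind_act G l C \<in> ind_set G H K T tact" unfolding ind_set_def using a(2) by blast
next
  have HC: "\<And>h. h \<in> H \<Longrightarrow> h \<in> carrier G" by (rule subgroup.mem_carrier[OF sH])
  fix C assume C: "C \<in> ind_set G H K T tact"
  then obtain a t where a: "a \<in> H" "t \<in> T" "C = ind_class G K tact a t" unfolding ind_set_def by blast
  show "ind_act G \<one> C = C" unfolding a(3) using ic_act[OF one_closed HC[OF a(1)]] HC[OF a(1)] by simp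
next
  have HC: "\<And>h. h \<in> H \<Longrightarrow> h \<in> carrier G" by (rule subgroup.mem_carrier[OF sH])
  fix l l' C assume l: "l \<in> H" and l': "l' \<in> H" and C: "C \<in> ind_set G H K T tact"
  then obtain a t where a: "a \<in> H" "t \<in> T" "C = ind_class G K tact a t" unfolding ind_set_def by blast
  show "ind_act G (l \<otimes> l') C = ind_act G l (ind_act G l' C)" unfolding a(3)
    using ic_act HC[OF l] HC[OF l'] HC[OF a(1)] by (simp add: m_assoc)
qed


end


theorem mainTheorem5:
  fixes G :: "('g, 'm) monoid_scheme"
    and Op :: "nat \<Rightarrow> 'a topology"
    and act :: "nat \<Rightarrow> 'g \<times> (nat \<Rightarrow> nat) \<Rightarrow> 'a \<Rightarrow> 'a"
    and e :: 'a
    and gamma :: "nat list \<Rightarrow> 'a \<Rightarrow> (nat \<Rightarrow> 'a) \<Rightarrow> 'a"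
    and H K :: "'g set"
    and T :: "'b set"
    and tact :: "'g \<Rightarrow> 'b \<Rightarrow> 'b"
  assumes "group G" and "finite (carrier G)"
    and "N_infty_operad G Op act e gamma"
    and "subgroup H G" and "subgroup K G" and "K \<subseteq> H"
    and "finite T" and "set_action G K T tact"
    and "admissible Op act H (coset_set G H K) (coset_act G)"
    and "admissible Op act K T tact"
  shows "admissible Op act H (ind_set G H K T tact) (ind_act G)"
proof -
  note grp = assms(1) and sH = assms(4) and sK = assms(5) and KH = assms(6) and sa = assms(8)
  interpret group G by (rule grp)
  have GO: "G_operad G Op act e gamma" using assms(3) unfolding N_infty_operad_def by (rule conjunct1)
  have top: "\<And>n. top_action (G \<times>\<times> Sym n) (Op n) (act n)" using GO unfolding G_operad_def by simp
  have cont: "\<And>ns. continuous_map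
              (prod_topology (Op (length ns)) (product_topology (\<lambda>i. Op (ns ! i)) {..<length ns}))
              (Op (sum_list ns)) (\<lambda>(x, ys). gamma ns x ys)" using GO unfolding G_operad_def by simp
  have geq: "\<And>ns x ys g. x \<in> topspace (Op (length ns)) \<Longrightarrow> ys \<in> (PiE {..<length ns} (\<lambda>i. topspace (Op (ns ! i))))
        \<Longrightarrow> g \<in> carrier G \<Longrightarrow>
        gamma ns (act (length ns) (g, id) x) (\<lambda>i\<in>{..<length ns}. act (ns ! i) (g, id) (ys i))
          = act (sum_list ns) (g, id) (gamma ns x ys)" using GO unfolding G_operad_def by simp
  have speq: "\<And>ns x ys s. x \<in> topspace (Op (length ns)) \<Longrightarrow> ys \<in> (PiE {..<length ns} (\<lambda>i. topspace (Op (ns ! i))))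
        \<Longrightarrow> s permutes {..<length ns} \<Longrightarrow>
        gamma ns (act (length ns) (\<one>\<^bsub>G\<^esub>, s) x) ys
          = act (sum_list ns) (\<one>\<^bsub>G\<^esub>, block_perm ns s) (gamma (permute_list ns s) x (\<lambda>j. ys (s j)))"
    using GO unfolding G_operad_def by simp
  have sbeq: "\<And>ns x ys taus. x \<in> topspace (Op (length ns)) \<Longrightarrow> ys \<in> (PiE {..<length ns} (\<lambda>i. topspace (Op (ns ! i))))
        \<Longrightarrow> (\<forall>i<length ns. taus i permutes {..<ns ! i}) \<Longrightarrow>
        gamma ns x (\<lambda>i\<in>{..<length ns}. act (ns ! i) (\<one>\<^bsub>G\<^esub>, taus i) (ys i))
          = act (sum_list ns) (\<one>\<^bsub>G\<^esub>, block_sum ns taus) (gamma ns x ys)"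
    using GO unfolding G_operad_def by simp
  have HC: "\<And>h. h \<in> H \<Longrightarrow> h \<in> carrier G" by (rule subgroup.mem_carrier[OF sH])
  have KC: "\<And>k. k \<in> K \<Longrightarrow> k \<in> carrier G" by (rule subgroup.mem_carrier[OF sK])
  define C where "C = coset_set G H K"
  define m where "m = card C"
  define n where "n = card T"
  define I where "I = ind_set G H K T tact"
  have caC: "set_action G H C (coset_act G)" unfolding C_def by (rule coset_action[OF grp sK sa sH KH])
  have caI: "set_action G H I (ind_act G)" unfolding I_def by (rule ind_action[OF grp sK sa sH])
  obtain f1 where f1: "bij_betw f1 C {..<m}"
    and fx: "fixset (graph_of H C f1 (coset_act G)) (act m) (Op m) \<noteq> {}"
    using assms(9) unfolding admissible_def C_def[symmetric] m_def[symmetric] by blast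
  obtain x where x: "x \<in> fixset (graph_of H C f1 (coset_act G)) (act m) (Op m)" using fx by blast
  obtain f2 where f2: "bij_betw f2 T {..<n}"
    and fy: "fixset (graph_of K T f2 tact) (act n) (Op n) \<noteq> {}"
    using assms(10) unfolding admissible_def n_def[symmetric] by blast
  obtain y where y: "y \<in> fixset (graph_of K T f2 tact) (act n) (Op n)" using fy by blast
  define s1 where "s1 = perm_via C f1 (coset_act G)"
  define s2 where "s2 = perm_via T f2 tact"
  have xtop: "x \<in> topspace (Op m)" using x unfolding fixset_def by simp
  have xfix: "\<And>h. h \<in> H \<Longrightarrow> act m (h, s1 h) x = x"
    using x unfolding fixset_def graph_of_def s1_def by blast
  have ytop: "y \<in> topspace (Op n)" using y unfolding fixset_def by simp
  have yfix: "\<And>k. k \<in> K \<Longrightarrow> act n (k, s2 k) y = y"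
    using y unfolding fixset_def graph_of_def s2_def by blast
  define f1i where "f1i = inv_into C f1"
  define f2i where "f2i = inv_into T f2"
  define r where "r i = (SOME a. a \<in> H \<and> a <#\<^bsub>G\<^esub> K = f1i i)" for i
  have r: "r i \<in> H \<and> r i <#\<^bsub>G\<^esub> K = f1i i" if i: "i < m" for i
  proof -
    have "f1i i \<in> C" using f1 i unfolding f1i_def by (metis bij_betw_def inv_into_into lessThan_iff)
    then obtain a where "a \<in> H \<and> a <#\<^bsub>G\<^esub> K = f1i i" unfolding C_def coset_set_def by blast
    thus ?thesis unfolding r_def by (rule someI)
  qed
  define N where "N = m * n"
  define Finv where "Finv q = ind_class G K tact (r (q div n)) (f2i (q mod n))" for q
  have f1f1i: "\<And>i. i < m \<Longrightarrow> f1 (f1i i) = i" unfolding f1i_def using f1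
    by (simp add: bij_betw_inv_into_right)
  have f2f2i: "\<And>u. u < n \<Longrightarrow> f2 (f2i u) = u" unfolding f2i_def using f2
    by (simp add: bij_betw_inv_into_right)
  have f2iT: "\<And>u. u < n \<Longrightarrow> f2i u \<in> T" unfolding f2i_def using f2
    by (metis bij_betw_def inv_into_into lessThan_iff)
  have f2if2: "\<And>t. t \<in> T \<Longrightarrow> f2i (f2 t) = t" unfolding f2i_def using f2
    by (simp add: bij_betw_inv_into_left)
  have f2T: "\<And>t. t \<in> T \<Longrightarrow> f2 t < n" using f2 unfolding bij_betw_def by auto
  have f1C: "\<And>c. c \<in> C \<Longrightarrow> f1 c < m" using f1 unfolding bij_betw_def by auto
  have f1if1: "\<And>c. c \<in> C \<Longrightarrow> f1i (f1 c) = c" unfolding f1i_def using f1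
    by (simp add: bij_betw_inv_into_left)
  have rC: "\<And>i. i < m \<Longrightarrow> r i \<in> carrier G" using r HC by blast
  have divlt: "\<And>p. p < N \<Longrightarrow> p div n < m"
    unfolding N_def by (metis less_mult_imp_div_less)
  have modlt: "\<And>p. p < N \<Longrightarrow> p mod n < n"
    unfolding N_def by (metis mod_less_divisor mult_0_right not_gr0 not_less0)
  have Bij: "bij_betw Finv {..<N} I"
    unfolding bij_betw_def
  proof
    show "inj_on Finv {..<N}"
    proof (rule inj_onI)
      fix p q assume p: "p \<in> {..<N}" and q: "q \<in> {..<N}" and eq: "Finv p = Finv q"
      define i where "i = p div n"
      define j where "j = q div n"
      define u where "u = p mod n"
      define v where "v = q mod n"
      have i: "i < m" and j: "j < m" and u: "u < n" and v: "v < n"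
        using p q divlt modlt i_def j_def u_def v_def by auto
      have "(r i, f2i u) \<in> Finv p" unfolding Finv_def i_def[symmetric] u_def[symmetric]
        by (rule ic_self[OF grp sK sa rC[OF i] f2iT[OF u]])
      hence "(r i, f2i u) \<in> Finv q" using eq by simp
      hence "(r i, f2i u) \<in> ind_class G K tact (r j) (f2i v)"
        unfolding Finv_def j_def v_def .
      then obtain k where k: "k \<in> K" "r i = r j \<otimes>\<^bsub>G\<^esub> inv\<^bsub>G\<^esub> k" "f2i u = tact k (f2i v)"
        using ic_mem[OF grp sK sa] by blast
      have ik: "inv\<^bsub>G\<^esub> k \<in> K" by (rule subgroup.m_inv_closed[OF sK k(1)])
      have "r i <#\<^bsub>G\<^esub> K = r j <#\<^bsub>G\<^esub> K" unfolding k(2) by (rule lc_eqI[OF grp sK sa rC[OF j] ik])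
      hence "f1i i = f1i j" using r i j by simp
      hence ij: "i = j" using f1f1i i j by metis
      have "r i = r i \<otimes>\<^bsub>G\<^esub> inv\<^bsub>G\<^esub> k" using k(2) ij by simp
      hence "inv\<^bsub>G\<^esub> k = \<one>\<^bsub>G\<^esub>" using l_cancel_one' rC[OF i] KC[OF ik] by blast
      hence "k = \<one>\<^bsub>G\<^esub>" using KC[OF k(1)] by simp
      hence "f2i u = f2i v" using k(3) sa f2iT[OF v] unfolding set_action_def by simp
      hence "u = v" using f2f2i u v by metis
      thus "p = q" using ij i_def j_def u_def v_def by (metis div_mult_mod_eq)
    qed
  next
    show "Finv ` {..<N} = I"
    proof (intro equalityI subsetI)
      fix c assume "c \<in> Finv ` {..<N}"
      then obtain p where p: "p < N" "c = Finv p" by blast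
      show "c \<in> I" unfolding I_def ind_set_def p(2) Finv_def
        using r[OF divlt[OF p(1)]] f2iT[OF modlt[OF p(1)]] by blast
    next
      fix c assume "c \<in> I"
      then obtain a t where a: "a \<in> H" and t: "t \<in> T" and c: "c = ind_class G K tact a t"
        unfolding I_def ind_set_def by blast
      have aC: "a <#\<^bsub>G\<^esub> K \<in> C" unfolding C_def coset_set_def using a by blast
      define i where "i = f1 (a <#\<^bsub>G\<^esub> K)"
      have i: "i < m" unfolding i_def using f1C[OF aC] .
      have "r i <#\<^bsub>G\<^esub> K = a <#\<^bsub>G\<^esub> K" using r[OF i] f1if1[OF aC] i_def by simp
      hence "a <#\<^bsub>G\<^esub> K = r i <#\<^bsub>G\<^esub> K" by simp
      hence kK: "inv\<^bsub>G\<^esub> (r i) \<otimes>\<^bsub>G\<^esub> a \<in> K" by (rule lc_eq[OF grp sK sa HC[OF a] rC[OF i]])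
      define k where "k = inv\<^bsub>G\<^esub> (r i) \<otimes>\<^bsub>G\<^esub> a"
      have ak: "a = r i \<otimes>\<^bsub>G\<^esub> k" unfolding k_def using rC[OF i] HC[OF a]
        by (simp add: cancel1[OF grp sK sa])
      have c2: "c = ind_class G K tact (r i) (tact k t)" unfolding c ak
        by (rule ic_shift[OF grp sK sa rC[OF i] kK[folded k_def] t])
      have w: "tact k t \<in> T" using sa kK[folded k_def] t unfolding set_action_def by blast
      define u where "u = f2 (tact k t)"
      have u: "u < n" unfolding u_def using f2T[OF w] .
      define p where "p = i * n + u"
      have "Suc i * n \<le> m * n" using i by (intro mult_le_mono1) simp
      hence pN: "p < N" unfolding p_def N_def using u by simp
      have "p div n = i" "p mod n = u" unfolding p_def using u by auto
      hence "Finv p = c" unfolding Finv_def c2 u_def using f2if2[OF w] by simp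
      thus "c \<in> Finv ` {..<N}" using pN by blast
    qed
  qed
  have cardI: "card I = N" using bij_betw_same_card[OF Bij] by simp
  define F where "F = inv_into {..<N} Finv"
  have Fbij: "bij_betw F I {..<card I}" unfolding F_def cardI by (rule bij_betw_inv_into[OF Bij])
  have FFinv: "\<And>p. p < N \<Longrightarrow> F (Finv p) = p" unfolding F_def using Bij
    by (simp add: bij_betw_inv_into_left)
  have FinvF: "\<And>p. p < N \<Longrightarrow> inv_into I F p = Finv p"
  proof -
    fix p assume p: "p < N"
    have "Finv p \<in> I" using Bij p by (auto simp: bij_betw_def)
    hence "inv_into I F (F (Finv p)) = Finv p" using Fbij by (simp add: bij_betw_inv_into_left)
    thus "inv_into I F p = Finv p" using FFinv[OF p] by simp
  qed
  define ns where "ns = replicate m n"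
  have lns: "length ns = m" unfolding ns_def by simp
  have sns: "sum_list ns = N" unfolding ns_def N_def by (simp add: sum_list_replicate)
  have nsi: "\<And>i. i < m \<Longrightarrow> ns ! i = n" unfolding ns_def by simp
  define ys where "ys = (\<lambda>i\<in>{..<m}. act n (r i, id) y)"
  have idp: "\<And>k. (id :: nat \<Rightarrow> nat) \<in> carrier (Sym k)" by (simp add: permutes_id)
  have ysT: "\<And>i. i < m \<Longrightarrow> act n (r i, id) y \<in> topspace (Op n)"
    using act_top[OF top] rC idp ytop by simp
  have ysPi: "ys \<in> PiE {..<length ns} (\<lambda>i. topspace (Op (ns ! i)))"
    unfolding ys_def lns using ysT nsi by (simp add: PiE_iff)
  define z where "z = gamma ns x ys"
  have ztop: "z \<in> topspace (Op N)"
  proof -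
    have "(x, ys) \<in> topspace (prod_topology (Op (length ns)) (product_topology (\<lambda>i. Op (ns ! i)) {..<length ns}))"
      using xtop ysPi lns by simp
    hence "(\<lambda>(x, ys). gamma ns x ys) (x, ys) \<in> topspace (Op (sum_list ns))"
      using continuous_map_image_subset_topspace[OF cont[of ns]] by blast
    thus ?thesis unfolding z_def sns by simp
  qed
  have zfix: "act N (h, perm_via I F (ind_act G) h) z = z" if h: "h \<in> H" for h
  proof -
    have hc: "h \<in> carrier G" using HC[OF h] .
    have ih: "inv\<^bsub>G\<^esub> h \<in> H" by (rule subgroup.m_inv_closed[OF sH h])
    define s where "s = s1 (inv\<^bsub>G\<^esub> h)"
    have sp: "s permutes {..<m}" unfolding s_def s1_def m_def by (rule pv_permutes[OF grp sH caC f1[unfolded m_def] ih])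
    have s1p: "s1 h permutes {..<m}" unfolding s1_def m_def by (rule pv_permutes[OF grp sH caC f1[unfolded m_def] h])
    have ss: "\<And>j. s1 h (s j) = j"
    proof -
      fix j
      have "s1 (h \<otimes>\<^bsub>G\<^esub> inv\<^bsub>G\<^esub> h) = s1 h \<circ> s" unfolding s_def s1_def
        by (rule pv_comp[OF caC f1[unfolded m_def] h ih])
      hence "s1 h \<circ> s = id" using hc pv_one[OF caC f1[unfolded m_def]] unfolding s1_def by simp
      thus "s1 h (s j) = j" by (metis comp_apply id_apply)
    qed
    define kk where "kk i = inv\<^bsub>G\<^esub> (r (s1 h i)) \<otimes>\<^bsub>G\<^esub> (h \<otimes>\<^bsub>G\<^esub> r i)" for i
    have jlt: "\<And>i. i < m \<Longrightarrow> s1 h i < m" using perm_lt[OF s1p] .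
    have kkK: "kk i \<in> K" if i: "i < m" for i
    proof -
      have fC: "f1i i \<in> C" using f1 i unfolding f1i_def by (metis bij_betw_def inv_into_into lessThan_iff)
      have ca: "coset_act G h (f1i i) = (h \<otimes>\<^bsub>G\<^esub> r i) <#\<^bsub>G\<^esub> K"
        unfolding coset_act_def using r[OF i] lcos_m_assoc[OF subgroup.subset[OF sK] hc rC[OF i]] by simp
      have caC': "coset_act G h (f1i i) \<in> C" using caC h fC unfolding set_action_def by simp
      have "s1 h i = f1 (coset_act G h (f1i i))" unfolding s1_def perm_via_def f1i_def
        using i m_def by simp
      hence "f1i (s1 h i) = coset_act G h (f1i i)" using f1if1[OF caC'] by simp
      hence "(h \<otimes>\<^bsub>G\<^esub> r i) <#\<^bsub>G\<^esub> K = r (s1 h i) <#\<^bsub>G\<^esub> K" using ca r[OF jlt[OF i]] by simp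
      thus ?thesis unfolding kk_def
        by (rule lc_eq[OF grp sK sa m_closed[OF hc rC[OF i]] rC[OF jlt[OF i]]])
    qed
    have hr: "h \<otimes>\<^bsub>G\<^esub> r i = r (s1 h i) \<otimes>\<^bsub>G\<^esub> kk i" if i: "i < m" for i
      unfolding kk_def using rC[OF i] rC[OF jlt[OF i]] hc by (simp add: cancel1[OF grp sK sa])
    define tau where "tau i = s2 (inv\<^bsub>G\<^esub> (kk i))" for i
    have taup: "tau i permutes {..<n}" if i: "i < m" for i unfolding tau_def s2_def n_def
      by (rule pv_permutes[OF grp sK sa f2[unfolded n_def] subgroup.m_inv_closed[OF sK kkK[OF i]]])
    have taus2: "tau i \<circ> s2 (kk i) = id" if i: "i < m" for i
    proof -
      have "s2 (inv\<^bsub>G\<^esub> (kk i) \<otimes>\<^bsub>G\<^esub> kk i) = tau i \<circ> s2 (kk i)" unfolding tau_def s2_def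
        by (rule pv_comp[OF sa f2[unfolded n_def] subgroup.m_inv_closed[OF sK kkK[OF i]] kkK[OF i]])
      thus ?thesis using KC[OF kkK[OF i]] pv_one[OF sa f2[unfolded n_def]] unfolding s2_def by simp
    qed
    have s2p: "\<And>k. k \<in> K \<Longrightarrow> s2 k permutes {..<n}" unfolding s2_def n_def
      by (rule pv_permutes[OF grp sK sa f2[unfolded n_def]])
    define Y where "Y = (\<lambda>i\<in>{..<m}. act n (r (s1 h i), id) y)"
    have E3i: "act n (h, id) (ys i) = act n (\<one>\<^bsub>G\<^esub>, tau i) (Y i)" if i: "i < m" for i
    proof -
      have c1: "(h, id) \<in> carrier (G \<times>\<times> Sym n)" using hc idp by simp
      have c2: "(r i, id) \<in> carrier (G \<times>\<times> Sym n)" using rC[OF i] idp by simp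
      have c3: "(\<one>\<^bsub>G\<^esub>, tau i) \<in> carrier (G \<times>\<times> Sym n)" using taup[OF i] by simp
      have c4: "(r (s1 h i), id) \<in> carrier (G \<times>\<times> Sym n)" using rC[OF jlt[OF i]] idp by simp
      have c5: "(kk i, s2 (kk i)) \<in> carrier (G \<times>\<times> Sym n)" using KC[OF kkK[OF i]] s2p[OF kkK[OF i]] by simp
      have "act n (h, id) (ys i) = act n ((h, id) \<otimes>\<^bsub>G \<times>\<times> Sym n\<^esub> (r i, id)) y"
        unfolding ys_def using i act_comp[OF top c1 c2 ytop] by simp
      also have "(h, id) \<otimes>\<^bsub>G \<times>\<times> Sym n\<^esub> (r i, id) = (\<one>\<^bsub>G\<^esub>, tau i) \<otimes>\<^bsub>G \<times>\<times> Sym n\<^esub> ((r (s1 h i), id) \<otimes>\<^bsub>G \<times>\<times> Sym n\<^esub> (kk i, s2 (kk i)))"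
        using hr[OF i] taus2[OF i] rC[OF jlt[OF i]] KC[OF kkK[OF i]] by simp
      also have "act n \<dots> y = act n (\<one>\<^bsub>G\<^esub>, tau i) (act n (r (s1 h i), id) (act n (kk i, s2 (kk i)) y))"
      proof -
        have c45: "(r (s1 h i), id) \<otimes>\<^bsub>G \<times>\<times> Sym n\<^esub> (kk i, s2 (kk i)) \<in> carrier (G \<times>\<times> Sym n)"
          using rC[OF jlt[OF i]] KC[OF kkK[OF i]] s2p[OF kkK[OF i]] by simp
        show ?thesis using act_comp[OF top c3 c45 ytop] act_comp[OF top c4 c5 ytop] by simp
      qed
      also have "\<dots> = act n (\<one>\<^bsub>G\<^esub>, tau i) (Y i)" unfolding Y_def using i yfix[OF kkK[OF i]] by simp
      finally show ?thesis .
    qed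
    have sT: "act m (\<one>\<^bsub>G\<^esub>, s) x \<in> topspace (Op m)"
      using act_top[OF top _ xtop] sp by simp
    have YPi: "Y \<in> PiE {..<length ns} (\<lambda>i. topspace (Op (ns ! i)))"
      unfolding Y_def lns using ysT[OF jlt] nsi rC jlt by (simp add: PiE_iff ysT)
    have E1: "act N (h, id) z = gamma ns (act m (h, id) x) (\<lambda>i\<in>{..<m}. act (ns ! i) (h, id) (ys i))"
      using geq[OF _ ysPi hc, of x] xtop unfolding z_def lns sns by simp
    have E2: "act m (h, id) x = act m (\<one>\<^bsub>G\<^esub>, s) x"
    proof -
      have "s \<circ> s1 h = s1 (inv\<^bsub>G\<^esub> h \<otimes>\<^bsub>G\<^esub> h)" unfolding s_def s1_def
        by (rule pv_comp[OF caC f1[unfolded m_def] ih h, symmetric])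
      hence e: "s \<circ> s1 h = id" using hc pv_one[OF caC f1[unfolded m_def]] unfolding s1_def by simp
      have "(h, id) = (\<one>\<^bsub>G\<^esub>, s) \<otimes>\<^bsub>G \<times>\<times> Sym m\<^esub> (h, s1 h)" using hc e by simp
      hence "act m (h, id) x = act m (\<one>\<^bsub>G\<^esub>, s) (act m (h, s1 h) x)"
        using act_comp[OF top _ _ xtop, of "(\<one>\<^bsub>G\<^esub>, s)" "(h, s1 h)"] sp s1p hc by simp
      thus ?thesis using xfix[OF h] by simp
    qed
    have E3: "(\<lambda>i\<in>{..<m}. act (ns ! i) (h, id) (ys i)) = (\<lambda>i\<in>{..<length ns}. act (ns ! i) (\<one>\<^bsub>G\<^esub>, tau i) (Y i))"
      unfolding lns by (rule restrict_ext) (simp add: nsi E3i)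
    define bs where "bs = block_sum ns tau"
    define bp where "bp = block_perm ns s"
    have E4: "gamma ns (act m (\<one>\<^bsub>G\<^esub>, s) x) (\<lambda>i\<in>{..<length ns}. act (ns ! i) (\<one>\<^bsub>G\<^esub>, tau i) (Y i))
       = act N (\<one>\<^bsub>G\<^esub>, bs) (gamma ns (act m (\<one>\<^bsub>G\<^esub>, s) x) Y)"
      using sbeq[OF _ YPi, of "act m (\<one>\<^bsub>G\<^esub>, s) x" tau] sT taup unfolding lns sns bs_def
      by (simp add: nsi)
    have Ys: "(\<lambda>j. Y (s j)) = ys"
    proof
      fix j show "Y (s j) = ys j"
      proof (cases "j < m")
        case True thus ?thesis unfolding Y_def ys_def using perm_lt[OF sp True] ss by simp
      next
        case False
        hence "s j = j" using sp by (simp add: permutes_def)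
        thus ?thesis unfolding Y_def ys_def using False by simp
      qed
    qed
    have E5: "gamma ns (act m (\<one>\<^bsub>G\<^esub>, s) x) Y = act N (\<one>\<^bsub>G\<^esub>, bp) z"
      using speq[OF _ YPi, of x s] xtop sp unfolding lns sns bp_def z_def
      by (simp add: Ys ns_def plist_rep[OF sp])
    have E: "act N (h, id) z = act N (\<one>\<^bsub>G\<^esub>, bs) (act N (\<one>\<^bsub>G\<^esub>, bp) z)"
      using E1 E2 E3 E4 E5 by simp
    define sig where "sig = perm_via I F (ind_act G) h"
    have sigp: "sig permutes {..<N}" unfolding sig_def using pv_permutes[OF grp sH caI Fbij h] cardI by simp
    have bsp: "bs permutes {..<N}" unfolding bs_def ns_def N_def by (rule bs_permutes) (rule taup)
    have bpp: "bp permutes {..<N}" unfolding bp_def ns_def N_def by (rule bp_permutes[OF sp])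
    have npos: "n > 0" if "p < N" for p using that unfolding N_def by (cases n) auto
    have comp: "sig (bs (bp p)) = p" for p
    proof (cases "p < N")
      case False
      thus ?thesis unfolding sig_def bs_def bp_def perm_via_def cardI
        by (simp add: ns_def N_def bp_rep[OF sp] bs_rep)
    next
      case True
      have n0: "n > 0" using npos[OF True] .
      define i' where "i' = s (p div n)"
      have i': "i' < m" unfolding i'_def using perm_lt[OF sp divlt[OF True]] .
      have pm: "p mod n < n" using modlt[OF True] .
      have "Suc i' * n \<le> m * n" using i' by (intro mult_le_mono1) simp
      hence q0N: "i' * n + p mod n < N" unfolding N_def using pm by simp
      have bpv: "bp p = i' * n + p mod n" unfolding bp_def ns_def i'_def
        using bp_rep[OF sp] True N_def by simp
      define t0 where "t0 = f2i (p mod n)"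
      have t0: "t0 \<in> T" unfolding t0_def using f2iT[OF pm] .
      have ikk: "inv\<^bsub>G\<^esub> (kk i') \<in> K" by (rule subgroup.m_inv_closed[OF sK kkK[OF i']])
      define w where "w = tact (inv\<^bsub>G\<^esub> (kk i')) t0"
      have w: "w \<in> T" unfolding w_def using sa ikk t0 unfolding set_action_def by simp
      have tauv: "tau i' (p mod n) = f2 w" unfolding tau_def s2_def perm_via_def w_def t0_def f2i_def
        using pm n_def by simp
      have bsv: "bs (bp p) = i' * n + f2 w" unfolding bpv bs_def ns_def
        using bs_rep q0N N_def pm tauv n0 by simp
      have u': "f2 w < n" using f2T[OF w] .
      have "Suc i' * n \<le> m * n" using i' by (intro mult_le_mono1) simp
      hence q1N: "i' * n + f2 w < N" unfolding N_def using u' by simp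
      have "Finv (i' * n + f2 w) = ind_class G K tact (r i') w"
        unfolding Finv_def using u' f2if2[OF w] by simp
      hence "ind_act G h (Finv (i' * n + f2 w)) = ind_class G K tact (h \<otimes>\<^bsub>G\<^esub> r i') w"
        using ic_act[OF grp sK sa hc rC[OF i']] by simp
      also have "\<dots> = ind_class G K tact (r (s1 h i') \<otimes>\<^bsub>G\<^esub> kk i') w" using hr[OF i'] by simp
      also have "\<dots> = ind_class G K tact (r (s1 h i')) (tact (kk i') w)"
        by (rule ic_shift[OF grp sK sa rC[OF jlt[OF i']] kkK[OF i'] w])
      also have "tact (kk i') w = t0"
      proof -
        have "tact (kk i') w = tact (kk i' \<otimes>\<^bsub>G\<^esub> inv\<^bsub>G\<^esub> (kk i')) t0"
          unfolding w_def using sa kkK[OF i'] ikk t0 unfolding set_action_def by simp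
        thus ?thesis using KC[OF kkK[OF i']] sa t0 unfolding set_action_def by simp
      qed
      also have "s1 h i' = p div n" unfolding i'_def by (rule ss)
      also have "ind_class G K tact (r (p div n)) t0 = Finv p" unfolding Finv_def t0_def ..
      finally have fin: "ind_act G h (Finv (i' * n + f2 w)) = Finv p" .
      show ?thesis unfolding sig_def bsv perm_via_def cardI
        using q1N FinvF[OF q1N] fin FFinv[OF True] by simp
    qed
    have cid: "sig \<circ> (bs \<circ> bp) = id" using comp by auto
    have cg1: "\<And>q. q permutes {..<N} \<Longrightarrow> (\<one>\<^bsub>G\<^esub>, q) \<in> carrier (G \<times>\<times> Sym N)" by simp
    have hcar: "(h, id) \<in> carrier (G \<times>\<times> Sym N)" using hc idp by simp
    have bbp: "bs \<circ> bp permutes {..<N}" by (rule permutes_compose[OF bpp bsp])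
    have "act N (h, sig) z = act N ((\<one>\<^bsub>G\<^esub>, sig) \<otimes>\<^bsub>G \<times>\<times> Sym N\<^esub> (h, id)) z" using hc by simp
    also have "\<dots> = act N (\<one>\<^bsub>G\<^esub>, sig) (act N (\<one>\<^bsub>G\<^esub>, bs) (act N (\<one>\<^bsub>G\<^esub>, bp) z))"
      using act_comp[OF top cg1[OF sigp] hcar ztop] E by simp
    also have "act N (\<one>\<^bsub>G\<^esub>, bs) (act N (\<one>\<^bsub>G\<^esub>, bp) z) = act N (\<one>\<^bsub>G\<^esub>, bs \<circ> bp) z"
      using act_comp[OF top cg1[OF bsp] cg1[OF bpp] ztop] by simp
    also have "act N (\<one>\<^bsub>G\<^esub>, sig) (act N (\<one>\<^bsub>G\<^esub>, bs \<circ> bp) z) = act N (\<one>\<^bsub>G\<^esub>, sig \<circ> (bs \<circ> bp)) z"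
      using act_comp[OF top cg1[OF sigp] cg1[OF bbp] ztop] by simp
    also have "\<dots> = z" using cid act_one[OF top ztop] by simp
    finally show ?thesis unfolding sig_def .
  qed
  have "z \<in> fixset (graph_of H I F (ind_act G)) (act (card I)) (Op (card I))"
    unfolding fixset_def graph_of_def cardI using ztop zfix by blast
  thus ?thesis unfolding admissible_def I_def[symmetric] using Fbij by blast
qed

end
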